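(* Let $(S_n)_{n\ge1}$ be a sequence in $\mathcal S$ satisfying infill asymptotics with respect to $(S^*_m)_{m=1}^M$, let $(a_t)_{t\ge1}$ be positive with $a_t\to0$, and let $(k_N)_{N\ge1}$ be the adaptive number-of-neighbors sequence. Then (1) $\lim_{N\to\infty}k_N=\infty$, and (2) $\lim_{N\to\infty}R_{N,k_N}=0$.
   Context: $(\mathcal S,d)$ is a metric space and $S^*_1,\dots,S^*_M\in\mathcal S$ are fixed target locations. Infill asymptotics: for every $m$ and every open $U\ni S^*_m$, infinitely many $n$ satisfy $S_n\in U$. For $t\le N$, $R_{N,t}=\max_{1\le m\le M}\max\{d(S^*_m,S_n):n\le N,\ S_n \text{ is among the } t \text{ nearest neighbors of } S^*_m \text{ in } \{S_1,\dots,S_N\}\}$ (ties broken uniformly at random). Adaptive sequence: $k_1=1$ and $k_{N+1}=k_N+1$ if $R_{N+1,k_N+1}\le a_{k_N}$, otherwise $k_{N+1}=k_N$. *)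

theory Defs
  imports "HOL-Analysis.Analysis"
begin

text \<open>Indices are 1-based: observations S 1, S 2, ..., targets Sstar 1, ..., Sstar M.\<close>

text \<open>A is a valid choice of the t nearest neighbours (by index) of target x among
  S 1, ..., S N, for some tie-breaking.\<close>
definition is_knn :: "(nat \<Rightarrow> 'a::metric_space) \<Rightarrow> 'a \<Rightarrow> nat \<Rightarrow> nat \<Rightarrow> nat set \<Rightarrow> bool" where
  "is_knn S x N t A \<longleftrightarrow> A \<subseteq> {1..N} \<and> card A = t \<and>
     (\<forall>n\<in>A. \<forall>n'\<in>{1..N} - A. dist x (S n) \<le> dist x (S n'))"

definition infill :: "(nat \<Rightarrow> 'a::metric_space) \<Rightarrow> (nat \<Rightarrow> 'a) \<Rightarrow> nat \<Rightarrow> bool" where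
  "infill S Sstar M \<longleftrightarrow> (\<forall>m\<in>{1..M}. \<forall>U. open U \<and> Sstar m \<in> U \<longrightarrow>
      infinite {n. n \<ge> 1 \<and> S n \<in> U})"

text \<open>R_{N,t}, relative to a tie-breaking selection nn m N t of the t nearest neighbours
  of Sstar m among S 1..S N.\<close>
definition Rdist :: "(nat \<Rightarrow> 'a::metric_space) \<Rightarrow> (nat \<Rightarrow> 'a) \<Rightarrow> nat \<Rightarrow>
    (nat \<Rightarrow> nat \<Rightarrow> nat \<Rightarrow> nat set) \<Rightarrow> nat \<Rightarrow> nat \<Rightarrow> real" where
  "Rdist S Sstar M nn N t =
     Max {dist (Sstar m) (S n) | m n. m \<in> {1..M} \<and> n \<in> nn m N t}"

end

theory Submission
  imports Defs
begin

lemma knn_bound: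
  assumes "is_knn S x N t A"
  shows "(\<forall>n\<in>A. dist x (S n) \<le> r) \<longleftrightarrow> t \<le> card {n\<in>{1..N}. dist x (S n) \<le> r}"
proof
  assume h: "\<forall>n\<in>A. dist x (S n) \<le> r"
  have "A \<subseteq> {n\<in>{1..N}. dist x (S n) \<le> r}" using h assms unfolding is_knn_def by auto
  then show "t \<le> card {n\<in>{1..N}. dist x (S n) \<le> r}"
    using assms unfolding is_knn_def by (metis (no_types, lifting) card_mono finite_atLeastAtMost finite_subset mem_Collect_eq subsetI)
next
  assume h: "t \<le> card {n\<in>{1..N}. dist x (S n) \<le> r}"
  show "\<forall>n\<in>A. dist x (S n) \<le> r"
  proof (rule ccontr)
    assume "\<not> (\<forall>n\<in>A. dist x (S n) \<le> r)"
    then obtain n where n: "n \<in> A" "dist x (S n) > r" by force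
    have fA: "finite A" using assms unfolding is_knn_def using finite_subset by blast
    have "{n\<in>{1..N}. dist x (S n) \<le> r} \<subseteq> A - {n}"
      using assms n unfolding is_knn_def by force
    then have "card {n\<in>{1..N}. dist x (S n) \<le> r} \<le> card (A - {n})"
      using fA by (meson card_mono finite_Diff)
    also have "\<dots> < card A" using fA n(1) by (metis card_Diff1_less)
    finally show False using h assms unfolding is_knn_def by simp
  qed
qed

lemma Rdist_set:
  fixes M N t :: nat
  assumes "\<And>m. m \<in> {1..M} \<Longrightarrow> is_knn S (Sstar m) N t (nn m N t)"
  shows "{dist (Sstar m) (S n) | m n. m \<in> {1..M} \<and> n \<in> nn m N t}
     = (\<lambda>(m,n). dist (Sstar m) (S n)) ` (SIGMA m:{1..M}. nn m N t)"
    and "finite {dist (Sstar m) (S n) | m n. m \<in> {1..M} \<and> n \<in> nn m N t}"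
proof -
  show e: "{dist (Sstar m) (S n) | m n. m \<in> {1..M} \<and> n \<in> nn m N t}
     = (\<lambda>(m,n). dist (Sstar m) (S n)) ` (SIGMA m:{1..M}. nn m N t)" by fastforce
  have "(SIGMA m:{1..M}. nn m N t) \<subseteq> {1..M} \<times> {1..N}"
    using assms unfolding is_knn_def by blast
  moreover have "finite ({1..M} \<times> {1..N})" by simp
  ultimately have "finite (SIGMA m:{1..M}. nn m N t)" by (rule finite_subset)
  then show "finite {dist (Sstar m) (S n) | m n. m \<in> {1..M} \<and> n \<in> nn m N t}"
    using e by simp
qed

lemma Rdist_le:
  fixes M N t :: nat
  assumes M: "M \<ge> 1" and t: "1 \<le> t" "t \<le> N"
    and nv: "\<And>m N t. m \<in> {1..M} \<Longrightarrow> 1 \<le> t \<Longrightarrow> t \<le> N \<Longrightarrow> is_knn S (Sstar m) N t (nn m N t)"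
  shows "Rdist S Sstar M nn N t \<le> r \<longleftrightarrow>
           (\<forall>m\<in>{1..M}. t \<le> card {n\<in>{1..N}. dist (Sstar m) (S n) \<le> r})"
    and "Rdist S Sstar M nn N t \<ge> 0"
proof -
  have kn: "\<And>m. m \<in> {1..M} \<Longrightarrow> is_knn S (Sstar m) N t (nn m N t)" using nv t by blast
  note fs = Rdist_set[of M S Sstar N t nn, OF kn]
  have "1 \<in> {1..M}" using M by simp
  then have "nn 1 N t \<noteq> {}" using kn[of 1] t unfolding is_knn_def by auto
  then obtain n0 where n0: "n0 \<in> nn 1 N t" by blast
  have ne: "{dist (Sstar m) (S n) | m n. m \<in> {1..M} \<and> n \<in> nn m N t} \<noteq> {}"
    using n0 M by auto
  have "Rdist S Sstar M nn N t \<le> r \<longleftrightarrow> (\<forall>m\<in>{1..M}. \<forall>n\<in>nn m N t. dist (Sstar m) (S n) \<le> r)"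
    unfolding Rdist_def using Max_le_iff[OF fs(2) ne] by blast
  also have "\<dots> \<longleftrightarrow> (\<forall>m\<in>{1..M}. t \<le> card {n\<in>{1..N}. dist (Sstar m) (S n) \<le> r})"
    using knn_bound[OF kn] by blast
  finally show "Rdist S Sstar M nn N t \<le> r \<longleftrightarrow>
           (\<forall>m\<in>{1..M}. t \<le> card {n\<in>{1..N}. dist (Sstar m) (S n) \<le> r})" .
  have "dist (Sstar 1) (S n0) \<in> {dist (Sstar m) (S n) | m n. m \<in> {1..M} \<and> n \<in> nn m N t}"
    using n0 M by auto
  then have "dist (Sstar 1) (S n0) \<le> Rdist S Sstar M nn N t"
    unfolding Rdist_def using fs(2) by simp
  then show "Rdist S Sstar M nn N t \<ge> 0" using zero_le_dist order_trans by blast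
qed

theorem propositionD2:
  fixes S Sstar :: "nat \<Rightarrow> 'a::metric_space"
    and M :: nat
    and a :: "nat \<Rightarrow> real"
    and nn :: "nat \<Rightarrow> nat \<Rightarrow> nat \<Rightarrow> nat set"
    and k :: "nat \<Rightarrow> nat"
  assumes M_pos: "M \<ge> 1"
    and infill: "infill S Sstar M"
    and nn_valid: "\<And>m N t. m \<in> {1..M} \<Longrightarrow> 1 \<le> t \<Longrightarrow> t \<le> N \<Longrightarrow>
                      is_knn S (Sstar m) N t (nn m N t)"
    and a_pos: "\<And>t. t \<ge> 1 \<Longrightarrow> a t > 0"
    and a_lim: "a \<longlonglongrightarrow> 0"
    and k_1: "k 1 = 1"
    and k_step: "\<And>N. N \<ge> 1 \<Longrightarrow> k (N + 1) =
                   (if Rdist S Sstar M nn (N + 1) (k N + 1) \<le> a (k N) then k N + 1 else k N)"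
  shows "filterlim k at_top sequentially \<and>
         (\<lambda>N. Rdist S Sstar M nn N (k N)) \<longlonglongrightarrow> 0"
proof -
  have RL1: "Rdist S Sstar M nn N t \<le> r \<longleftrightarrow>
           (\<forall>m\<in>{1..M}. t \<le> card {n\<in>{1..N}. dist (Sstar m) (S n) \<le> r})"
    if "1 \<le> t" "t \<le> N" for N t r
    using Rdist_le(1)[of M t N S Sstar nn r, OF M_pos that nn_valid] by blast
  have RL2: "Rdist S Sstar M nn N t \<ge> 0" if "1 \<le> t" "t \<le> N" for N t
    using Rdist_le(2)[of M t N S Sstar nn, OF M_pos that nn_valid] by blast
  have kb: "1 \<le> k N \<and> k N \<le> N" if "N \<ge> 1" for N
    using that
  proof (induction N rule: dec_induct)
    case base then show ?case using k_1 by simp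
  next
    case (step n) then show ?case using k_step[of n] by simp
  qed
  have kinc: "k N \<le> k (N+1)" if "N \<ge> 1" for N using k_step[OF that] by simp
  have kmono: "k N \<le> k N'" if "1 \<le> N" "N \<le> N'" for N N'
    using that(2)
  proof (induction N' rule: dec_induct)
    case base then show ?case by simp
  next
    case (step n) then show ?case using kinc[of n] that(1) by simp
  qed
  have grow: "\<exists>N'\<ge>N. k N' > k N" if N1: "N \<ge> 1" for N
  proof (rule ccontr)
    assume "\<not> (\<exists>N'\<ge>N. k N' > k N)"
    note nex = this
    have const: "k N' = k N" if "N' \<ge> N" for N'
    proof -
      have "\<not> k N' > k N" using nex that by blast
      then show ?thesis using kmono[OF N1 that] by linarith
    qed
    define K where "K = k N"
    have K1: "K \<ge> 1" using kb[OF N1] K_def by simp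
    define r where "r = a K"
    have r0: "r > 0" using a_pos[OF K1] r_def by simp
    have ev: "\<forall>\<^sub>F N' in sequentially. K + 1 \<le> card {n\<in>{1..N'}. dist (Sstar m) (S n) \<le> r}"
      if m: "m \<in> {1..M}" for m
    proof -
      have "open (ball (Sstar m) r)" "Sstar m \<in> ball (Sstar m) r" using r0 by auto
      moreover have "\<forall>U. open U \<and> Sstar m \<in> U \<longrightarrow> infinite {n. n \<ge> 1 \<and> S n \<in> U}"
        using infill m unfolding infill_def by (rule bspec)
      ultimately have inf: "infinite {n. n \<ge> 1 \<and> S n \<in> ball (Sstar m) r}"
        by blast
      obtain B where B: "B \<subseteq> {n. n \<ge> 1 \<and> S n \<in> ball (Sstar m) r}" "finite B" "card B = K+1"
        using infinite_arbitrarily_large[OF inf, of "K+1"] by blast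
      obtain Nb where Nb: "\<forall>n\<in>B. n \<le> Nb" using finite_nat_set_iff_bounded_le[THEN iffD1, OF B(2)] by blast
      show ?thesis unfolding eventually_sequentially
      proof (intro exI[of _ Nb] allI impI)
        fix N' assume "Nb \<le> N'"
        have "B \<subseteq> {n\<in>{1..N'}. dist (Sstar m) (S n) \<le> r}"
        proof
          fix n assume nB: "n \<in> B"
          have "n \<in> {n. n \<ge> 1 \<and> S n \<in> ball (Sstar m) r}" using B(1) nB by (rule subsetD)
          then have h1: "n \<ge> 1" "dist (Sstar m) (S n) < r" by (simp_all add: mem_ball)
          have "n \<le> Nb" using Nb nB by blast
          then have h2: "n \<le> N'" using \<open>Nb \<le> N'\<close> by linarith
          show "n \<in> {n\<in>{1..N'}. dist (Sstar m) (S n) \<le> r}" using h1 h2 by simp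
        qed
        moreover have "finite {n\<in>{1..N'}. dist (Sstar m) (S n) \<le> r}" by simp
        ultimately have "card B \<le> card {n\<in>{1..N'}. dist (Sstar m) (S n) \<le> r}"
          by (intro card_mono)
        then show "K + 1 \<le> card {n\<in>{1..N'}. dist (Sstar m) (S n) \<le> r}"
          using B(3) by simp
      qed
    qed
    have E1: "\<forall>\<^sub>F N' in sequentially. \<forall>m\<in>{1..M}. K + 1 \<le> card {n\<in>{1..N'}. dist (Sstar m) (S n) \<le> r}"
      by (rule eventually_ball_finite) (use ev in auto)
    have E2: "\<forall>\<^sub>F N' in sequentially. N' \<ge> N" by (simp add: eventually_ge_at_top)
    obtain N' where N': "N' \<ge> N" "\<forall>m\<in>{1..M}. K + 1 \<le> card {n\<in>{1..N'+1}. dist (Sstar m) (S n) \<le> r}"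
    proof -
      have "\<forall>\<^sub>F N' in sequentially. N' \<ge> N \<and> (\<forall>m\<in>{1..M}. K + 1 \<le> card {n\<in>{1..N'}. dist (Sstar m) (S n) \<le> r})"
        using eventually_conj[OF E2 E1] by simp
      then obtain N0 where "\<forall>N'\<ge>N0. N' \<ge> N \<and> (\<forall>m\<in>{1..M}. K + 1 \<le> card {n\<in>{1..N'}. dist (Sstar m) (S n) \<le> r})"
        unfolding eventually_sequentially by blast
      note H = this
      have "max N N0 + 1 \<ge> N0" by simp
      then have "\<forall>m\<in>{1..M}. K + 1 \<le> card {n\<in>{1..max N N0+1}. dist (Sstar m) (S n) \<le> r}"
        using H by blast
      moreover have "max N N0 \<ge> N" by simp
      ultimately show ?thesis using that[of "max N N0"] by blast
    qed
    have kN': "k N' = K" "k (N'+1) = K" unfolding K_def using const[of N'] const[of "N'+1"] N'(1) by simp_all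
    have N'1: "N' \<ge> 1" using N'(1) N1 by simp
    have "K + 1 \<le> N' + 1" using kb[OF N'1] kN' by simp
    moreover have "1 \<le> K + 1" by simp
    ultimately have "Rdist S Sstar M nn (N'+1) (K+1) \<le> r"
      using RL1[of "K+1" "N'+1" r] N'(2) by blast
    then have "k (N'+1) = K + 1" using k_step[OF N'1] kN' r_def by simp
    then show False using kN' by simp
  qed
  have big: "\<exists>N\<ge>1. k N \<ge> j" for j
  proof (induction j)
    case 0 then show ?case by auto
  next
    case (Suc j)
    then obtain N where "N \<ge> 1" "k N \<ge> j" by blast
    then obtain N' where "N' \<ge> N" "k N' > k N" using grow by blast
    then have "N' \<ge> 1" "k N' \<ge> Suc j" using \<open>N \<ge> 1\<close> \<open>k N \<ge> j\<close> by linarith+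
    then show ?case by blast
  qed
  have lim1: "filterlim k at_top sequentially"
    unfolding filterlim_at_top eventually_sequentially
  proof
    fix Z
    obtain N where "N \<ge> 1" "k N \<ge> Z" using big by blast
    then show "\<exists>N. \<forall>n\<ge>N. Z \<le> k n"
    proof (intro exI[of _ N] allI impI)
      fix n assume "N \<le> n"
      then show "Z \<le> k n" using kmono[OF \<open>N \<ge> 1\<close> \<open>N \<le> n\<close>] \<open>k N \<ge> Z\<close> by linarith
    qed
  qed
  have bound: "k N \<ge> 2 \<longrightarrow> Rdist S Sstar M nn N (k N) \<le> a (k N - 1)" if "N \<ge> 1" for N
    using that
  proof (induction N rule: dec_induct)
    case base then show ?case using k_1 by simp
  next
    case (step n)
    have n1: "n \<ge> 1" using step by simp
    show ?case
    proof (cases "Rdist S Sstar M nn (n + 1) (k n + 1) \<le> a (k n)")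
      case True
      then show ?thesis using k_step[OF n1] by simp
    next
      case False
      then have e: "k (n+1) = k n" using k_step[OF n1] by simp
      have "Rdist S Sstar M nn (n+1) (k (n+1)) \<le> a (k (n+1) - 1)" if "2 \<le> k (n+1)"
      proof -
        have "Rdist S Sstar M nn n (k n) \<le> a (k n - 1)" using step e that by simp
        then have h: "\<forall>m\<in>{1..M}. k n \<le> card {i\<in>{1..n}. dist (Sstar m) (S i) \<le> a (k n - 1)}"
          using RL1[of "k n" n "a (k n - 1)"] kb[OF n1] by simp
        have "\<forall>m\<in>{1..M}. k n \<le> card {i\<in>{1..n+1}. dist (Sstar m) (S i) \<le> a (k n - 1)}"
        proof
          fix m assume "m \<in> {1..M}"
          have "card {i\<in>{1..n}. dist (Sstar m) (S i) \<le> a (k n - 1)}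
              \<le> card {i\<in>{1..n+1}. dist (Sstar m) (S i) \<le> a (k n - 1)}"
            by (rule card_mono) auto
          then show "k n \<le> card {i\<in>{1..n+1}. dist (Sstar m) (S i) \<le> a (k n - 1)}"
            using h \<open>m \<in> {1..M}\<close> by (meson le_trans)
        qed
        then show "Rdist S Sstar M nn (n+1) (k (n+1)) \<le> a (k (n+1) - 1)"
          using RL1[of "k n" "n+1"] kb[OF n1] e by simp
      qed
      then show ?thesis by simp
    qed
  qed
  have lk: "filterlim (\<lambda>N. k N - 1) at_top sequentially"
    using filterlim_compose[OF filterlim_minus_const_nat_at_top lim1] by simp
  have alim: "(\<lambda>N. a (k N - 1)) \<longlonglongrightarrow> 0"
    using filterlim_compose[OF a_lim lk] by (simp add: o_def)
  have ev2: "\<forall>\<^sub>F N in sequentially. k N \<ge> 2"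
    using lim1 unfolding filterlim_at_top by (rule spec)
  have up: "\<forall>\<^sub>F N in sequentially. Rdist S Sstar M nn N (k N) \<le> a (k N - 1)"
    using eventually_conj[OF ev2 eventually_ge_at_top[of 1]]
    by (rule eventually_mono) (use bound in blast)
  have lo: "\<forall>\<^sub>F N in sequentially. 0 \<le> Rdist S Sstar M nn N (k N)"
    using eventually_ge_at_top[of 1]
    by (rule eventually_mono) (use RL2 kb in blast)
  have "(\<lambda>N. Rdist S Sstar M nn N (k N)) \<longlonglongrightarrow> 0"
    by (rule tendsto_sandwich[OF lo up tendsto_const alim])
  with lim1 show ?thesis by blast
qed

end
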